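(* Let $n\ge k\ge 2$ and let $\Sigma\subset\mathbb{R}$ be a finite set. If $M$ is a $k\times n$ real matrix with all entries in $\Sigma$ such that every $k\times k$ submatrix formed by $k$ of its columns is nonsingular, then $|\Sigma|\ge\sqrt{n/k}$. *)

theory Defs
  imports Complex_Main "Jordan_Normal_Form.Determinant"
begin

(* A k x n real matrix M is represented as  M :: nat => nat => real, entry (i,j) for i<k, j<n.
   The k x k submatrix formed by columns c 0, ..., c (k-1)  (c injective into {..<n}). *)
definition col_submatrix :: "nat \<Rightarrow> (nat \<Rightarrow> nat \<Rightarrow> real) \<Rightarrow> (nat \<Rightarrow> nat) \<Rightarrow> real mat" where
  "col_submatrix k M c = mat k k (\<lambda>(i,j). M i (c j))"

end

theory Submission
  imports Defs
begin

lemma det_two_const_rows: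
  fixes A :: "real mat"
  assumes A: "A \<in> carrier_mat k k" and k: "2 \<le> k"
    and r0: "\<And>j. j < k \<Longrightarrow> A $$ (0,j) = a"
    and r1: "\<And>j. j < k \<Longrightarrow> A $$ (1,j) = b"
  shows "det A = 0"
proof -
  define p where "p = (if a = 0 \<and> b = 0 then 1 else b)"
  define q where "q = (if a = 0 \<and> b = 0 then 0 else - a)"
  have pq0: "(p, q) \<noteq> (0, 0)" unfolding p_def q_def by auto
  have apbq: "a * p + b * q = 0" unfolding p_def q_def by auto
  define v where "v = vec k (\<lambda>i. if i = 0 then p else if i = 1 then q else 0)"
  have vc: "v \<in> carrier_vec k" unfolding v_def by auto
  have vnz: "v \<noteq> 0\<^sub>v k"
  proof
    assume "v = 0\<^sub>v k"
    then have "v $ 0 = 0" "v $ 1 = 0" using k by auto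
    then show False using pq0 k unfolding v_def by auto
  qed
  have At: "transpose_mat A \<in> carrier_mat k k" using A by auto
  have prod: "transpose_mat A *\<^sub>v v = 0\<^sub>v k"
  proof (rule eq_vecI)
    fix j assume j: "j < dim_vec (0\<^sub>v k :: real vec)"
    then have j: "j < k" by simp
    have "(transpose_mat A *\<^sub>v v) $ j = (\<Sum>i\<in>{0..<k}. A $$ (i, j) * v $ i)"
      using A j vc by (auto simp: row_def scalar_prod_def intro!: sum.cong)
    also have "\<dots> = (\<Sum>i\<in>{0,1}. A $$ (i, j) * v $ i)"
      by (rule sum.mono_neutral_right) (use k in \<open>auto simp: v_def\<close>)
    also have "\<dots> = a * p + b * q" using r0[OF j] r1[OF j] k by (simp add: v_def)
    finally show "(transpose_mat A *\<^sub>v v) $ j = 0\<^sub>v k $ j" using apbq j by simp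
  qed (use A in auto)
  have "det (transpose_mat A) = 0"
    using det_0_iff_vec_prod_zero_field[OF At] vc vnz prod by blast
  then show ?thesis using det_transpose[OF A] by simp
qed

theorem claim1p4:
  fixes k n :: nat and \<Sigma> :: "real set" and M :: "nat \<Rightarrow> nat \<Rightarrow> real"
  assumes "2 \<le> k" and "k \<le> n"
    and "finite \<Sigma>"
    and "\<And>i j. i < k \<Longrightarrow> j < n \<Longrightarrow> M i j \<in> \<Sigma>"
    and "\<And>c. c ` {..<k} \<subseteq> {..<n} \<Longrightarrow> inj_on c {..<k} \<Longrightarrow>
           det (col_submatrix k M c) \<noteq> 0"
  shows "real (card \<Sigma>) \<ge> sqrt (real n / real k)"
proof -
  define F where "F p = {j. j < n \<and> (M 0 j, M 1 j) = p}" for p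
  have big: "\<not> (\<exists>p\<in>\<Sigma>\<times>\<Sigma>. k \<le> card (F p))"
  proof
    assume "\<exists>p\<in>\<Sigma>\<times>\<Sigma>. k \<le> card (F p)"
    then obtain p where kp: "k \<le> card (F p)" by blast
    have fin: "finite (F p)" unfolding F_def by auto
    obtain T where T: "T \<subseteq> F p" "card T = k" using obtain_subset_with_card_n[OF kp] by blast
    have finT: "finite T" using T fin finite_subset by blast
    obtain c where c: "bij_betw c {0..<card T} T" using ex_bij_betw_nat_finite[OF finT] by blast
    have c1: "c ` {..<k} \<subseteq> {..<n}" using c T unfolding bij_betw_def F_def
      by (auto simp: lessThan_atLeast0)
    have c2: "inj_on c {..<k}" using c T unfolding bij_betw_def by (simp add: lessThan_atLeast0)
    have cj: "\<And>j. j < k \<Longrightarrow> c j \<in> F p" using c T unfolding bij_betw_def by auto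
    have "det (col_submatrix k M c) = 0"
    proof (rule det_two_const_rows[where a = "fst p" and b = "snd p"])
      show "col_submatrix k M c \<in> carrier_mat k k" unfolding col_submatrix_def by auto
    next
      fix j assume j: "j < k"
      show "col_submatrix k M c $$ (0, j) = fst p" using cj[OF j] j assms(1)
        unfolding col_submatrix_def F_def by auto
      show "col_submatrix k M c $$ (1, j) = snd p" using cj[OF j] j assms(1)
        unfolding col_submatrix_def F_def by auto
    qed (use assms(1) in auto)
    then show False using assms(5)[OF c1 c2] by simp
  qed
  have cov: "{..<n} = (\<Union>p\<in>\<Sigma>\<times>\<Sigma>. F p)"
    unfolding F_def using assms(1,4) by auto
  have "n = card (\<Union>p\<in>\<Sigma>\<times>\<Sigma>. F p)" using cov by (metis card_lessThan)
  also have "\<dots> \<le> (\<Sum>p\<in>\<Sigma>\<times>\<Sigma>. card (F p))" by (rule card_UN_le) (use assms(3) in auto)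
  also have "\<dots> \<le> (\<Sum>p\<in>\<Sigma>\<times>\<Sigma>. k)" by (rule sum_mono) (use big in force)
  also have "\<dots> = card \<Sigma> * card \<Sigma> * k" by (simp add: card_cartesian_product)
  finally have "real n \<le> real (card \<Sigma>) ^ 2 * real k"
    by (simp add: power2_eq_square) (metis of_nat_le_iff of_nat_mult)
  then have "real n / real k \<le> real (card \<Sigma>) ^ 2" using assms(1)
    by (simp add: divide_le_eq)
  then have "sqrt (real n / real k) \<le> sqrt (real (card \<Sigma>) ^ 2)" by (rule real_sqrt_le_mono)
  then show ?thesis by simp
qed

end
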